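(* Let $S$ be a subcartesian space, $\mathfrak{a}$ a locally complete Lie subalgebra of $\mathrm{Vect}(S)$, and $\mu\in\check\Omega^k_{\mathfrak{a}}(S)$. Then for each $x\in S$ there exist a chart $\varphi:V\to\tilde V\subseteq\mathbb{R}^n$ about $x$ and a differential form $\tilde\mu\in\Omega^k(\mathbb{R}^n)$ such that $\mu|_V=\varphi^*\tilde\mu$, i.e. $\mu(v_1\wedge\dots\wedge v_k)=\tilde\mu_{\varphi(y)}(\varphi_*v_1,\dots,\varphi_*v_k)$ for all $y\in V$ and $v_1,\dots,v_k\in\check T^{\mathfrak{a}}_yS$.
   Context: A subcartesian space is a paracompact, second-countable, Hausdorff differential space $(S,C^\infty(S))$ in which each point has a chart, i.e. an open neighbourhood $U$ and a diffeomorphism $\varphi:U\to\tilde U$ onto a differential subspace of some $\mathbb{R}^n$. $T_yS$ is the space of derivations at $y$ (linear $v:C^\infty(S)\to\mathbb{R}$ with $v(fg)=f(y)v(g)+g(y)v(f)$); for a chart, $\varphi_*v\in T_{\varphi(y)}\mathbb{R}^n$ is $(\varphi_*v)(g)=v(g\circ\varphi)$. Vector fields are derivations $X$ of $C^\infty(S)$ whose maximal integral curves form a local flow with open domain; $\mathrm{Vect}(S)$ is the set of them. A family $\mathcal{F}$ of vector fields is locally complete if for $X,Y\in\mathcal{F}$, $x\in S$, $t\in\mathbb{R}$ with $(\exp(tX)_*Y)|_x$ defined, there is a neighbourhood $U$ of $x$ and $Z\in\mathcal{F}$ with $(\exp(tX)_*Y)|_U=Z|_U$. $\check T^{\mathfrak{a}}_yS$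 is the linear span of $\{X|_y: X\in\mathfrak{a}\}$. An $\mathfrak{a}$-orbital $k$-form is a function $\mu$ on $\bigwedge^k_S\check T^{\mathfrak{a}}S=\bigsqcup_{y}\bigwedge^k\check T^{\mathfrak{a}}_yS$, linear on each fibre, which is smooth: each point has a chart $\varphi:U\to\tilde U\subseteq\mathbb{R}^n$ and a smooth function $f$ on $\bigwedge^kT\mathbb{R}^n$ with $\mu=f\circ\bigwedge^k\varphi_*$ over $U$. $\check\Omega^k_{\mathfrak{a}}(S)$ denotes the set of these. *)

theory Defs
  imports "HOL-Analysis.Analysis" "HOL-Combinatorics.Permutations"
begin

text \<open>R^n is modelled as the vectors nat => real vanishing from index n on
  (product topology = Euclidean topology there).\<close>

definition Rn :: "nat \<Rightarrow> (nat \<Rightarrow> real) set" where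
  "Rn n = {x. \<forall>i\<ge>n. x i = 0}"

coinductive smooth_Rn :: "nat \<Rightarrow> ((nat \<Rightarrow> real) \<Rightarrow> real) \<Rightarrow> bool" for n where
  "continuous_on (Rn n) g \<Longrightarrow>
   (\<And>i. i < n \<Longrightarrow> \<exists>D. (\<forall>x\<in>Rn n. ((\<lambda>t. g (x(i := x i + t))) has_real_derivative D x) (at 0))
                        \<and> smooth_Rn n D) \<Longrightarrow>
   smooth_Rn n g"

definition vanish_off :: "'a set \<Rightarrow> ('a \<Rightarrow> real) \<Rightarrow> bool" where
  "vanish_off A f \<longleftrightarrow> (\<forall>x. x \<notin> A \<longrightarrow> f x = 0)"

text \<open>Functions of a differential space (S,C) are represented as functions vanishing off S.\<close>

definition dtop :: "'a set \<Rightarrow> ('a \<Rightarrow> real) set \<Rightarrow> 'a topology" where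
  "dtop S C = topology_generated_by {{x\<in>S. f x \<in> W} | f W. f \<in> C \<and> open W}"

definition differential_space :: "'a set \<Rightarrow> ('a \<Rightarrow> real) set \<Rightarrow> bool" where
  "differential_space S C \<longleftrightarrow>
     (\<forall>f\<in>C. vanish_off S f) \<and>
     (\<forall>n G fs. smooth_Rn n G \<and> (\<forall>i<n. fs i \<in> C) \<longrightarrow>
        (\<lambda>x. if x \<in> S then G (\<lambda>i. if i < n then fs i x else 0) else 0) \<in> C) \<and>
     (\<forall>f. vanish_off S f \<and>
        (\<forall>x\<in>S. \<exists>U. openin (dtop S C) U \<and> x \<in> U \<and> (\<exists>g\<in>C. \<forall>y\<in>U. f y = g y))
        \<longrightarrow> f \<in> C)"

definition subspace_fns :: "'a set \<Rightarrow> ('a \<Rightarrow> real) set \<Rightarrow> 'a set \<Rightarrow> ('a \<Rightarrow> real) set" where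
  "subspace_fns S C A = {f. vanish_off A f \<and>
     (\<forall>x\<in>A. \<exists>U. openin (dtop S C) U \<and> x \<in> U \<and> (\<exists>g\<in>C. \<forall>y\<in>U \<inter> A. f y = g y))}"

definition Rn_fns :: "nat \<Rightarrow> ((nat \<Rightarrow> real) \<Rightarrow> real) set" where
  "Rn_fns n = {g. vanish_off (Rn n) g \<and> smooth_Rn n g}"

definition diffeo :: "'a set \<Rightarrow> ('a \<Rightarrow> real) set \<Rightarrow> 'b set \<Rightarrow> ('b \<Rightarrow> real) set \<Rightarrow> ('a \<Rightarrow> 'b) \<Rightarrow> bool" where
  "diffeo A CA B CB \<phi> \<longleftrightarrow> bij_betw \<phi> A B \<and>
     (\<forall>g. vanish_off B g \<longrightarrow> (g \<in> CB \<longleftrightarrow> (\<lambda>y. if y \<in> A then g (\<phi> y) else 0) \<in> CA))"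

definition chart :: "'a set \<Rightarrow> ('a \<Rightarrow> real) set \<Rightarrow> 'a set \<Rightarrow> ('a \<Rightarrow> nat \<Rightarrow> real) \<Rightarrow> nat \<Rightarrow> bool" where
  "chart S C U \<phi> n \<longleftrightarrow> openin (dtop S C) U \<and> \<phi> ` U \<subseteq> Rn n \<and>
     diffeo U (subspace_fns S C U) (\<phi> ` U) (subspace_fns (Rn n) (Rn_fns n) (\<phi> ` U)) \<phi>"

definition paracompact_space :: "'a topology \<Rightarrow> bool" where
  "paracompact_space X \<longleftrightarrow> (\<forall>\<U>. (\<forall>U\<in>\<U>. openin X U) \<and> \<Union>\<U> = topspace X \<longrightarrow>
     (\<exists>\<V>. (\<forall>V\<in>\<V>. openin X V) \<and> \<Union>\<V> = topspace X \<and> (\<forall>V\<in>\<V>. \<exists>U\<in>\<U>. V \<subseteq> U) \<and>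
          (\<forall>x\<in>topspace X. \<exists>W. openin X W \<and> x \<in> W \<and> finite {V\<in>\<V>. V \<inter> W \<noteq> {}})))"

definition subcartesian :: "'a set \<Rightarrow> ('a \<Rightarrow> real) set \<Rightarrow> bool" where
  "subcartesian S C \<longleftrightarrow> differential_space S C \<and> Hausdorff_space (dtop S C) \<and>
     second_countable (dtop S C) \<and> paracompact_space (dtop S C) \<and>
     (\<forall>x\<in>S. \<exists>U \<phi> n. x \<in> U \<and> chart S C U \<phi> n)"

definition derivation :: "'a set \<Rightarrow> ('a \<Rightarrow> real) set \<Rightarrow> (('a \<Rightarrow> real) \<Rightarrow> ('a \<Rightarrow> real)) \<Rightarrow> bool" where
  "derivation S C X \<longleftrightarrow> (\<forall>f. f \<notin> C \<longrightarrow> X f = (\<lambda>_. 0)) \<and> (\<forall>f\<in>C. X f \<in> C) \<and>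
     (\<forall>f\<in>C. \<forall>g\<in>C. X (\<lambda>x. f x + g x) = (\<lambda>x. X f x + X g x) \<and>
                   X (\<lambda>x. f x * g x) = (\<lambda>x. f x * X g x + g x * X f x)) \<and>
     (\<forall>c. \<forall>f\<in>C. X (\<lambda>x. c * f x) = (\<lambda>x. c * X f x))"

definition vat :: "('a \<Rightarrow> real) set \<Rightarrow> (('a \<Rightarrow> real) \<Rightarrow> ('a \<Rightarrow> real)) \<Rightarrow> 'a \<Rightarrow> ('a \<Rightarrow> real) \<Rightarrow> real" where
  "vat C X y = (\<lambda>f. if f \<in> C then X f y else 0)"

definition int_curve :: "'a set \<Rightarrow> ('a \<Rightarrow> real) set \<Rightarrow> (('a \<Rightarrow> real) \<Rightarrow> ('a \<Rightarrow> real)) \<Rightarrow> 'a \<Rightarrow> real set \<Rightarrow> (real \<Rightarrow> 'a) \<Rightarrow> bool" where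
  "int_curve S C X x I c \<longleftrightarrow> is_interval I \<and> 0 \<in> I \<and> c 0 = x \<and> c ` I \<subseteq> S \<and>
     (\<forall>f\<in>C. \<forall>t\<in>I. ((\<lambda>s. f (c s)) has_real_derivative X f (c t)) (at t within I))"

definition max_int_curve :: "'a set \<Rightarrow> ('a \<Rightarrow> real) set \<Rightarrow> (('a \<Rightarrow> real) \<Rightarrow> ('a \<Rightarrow> real)) \<Rightarrow> 'a \<Rightarrow> real set \<Rightarrow> (real \<Rightarrow> 'a) \<Rightarrow> bool" where
  "max_int_curve S C X x I c \<longleftrightarrow> int_curve S C X x I c \<and>
     (\<forall>J d. int_curve S C X x J d \<longrightarrow> J \<subseteq> I \<and> (\<forall>t\<in>J. d t = c t))"

definition flow_dom :: "'a set \<Rightarrow> ('a \<Rightarrow> real) set \<Rightarrow> (('a \<Rightarrow> real) \<Rightarrow> ('a \<Rightarrow> real)) \<Rightarrow> 'a \<Rightarrow> real set" where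
  "flow_dom S C X x = (THE I. \<exists>c. max_int_curve S C X x I c)"

definition flow :: "'a set \<Rightarrow> ('a \<Rightarrow> real) set \<Rightarrow> (('a \<Rightarrow> real) \<Rightarrow> ('a \<Rightarrow> real)) \<Rightarrow> real \<Rightarrow> 'a \<Rightarrow> 'a" where
  "flow S C X t x = (SOME c. max_int_curve S C X x (flow_dom S C X x) c) t"

definition flow_domain :: "'a set \<Rightarrow> ('a \<Rightarrow> real) set \<Rightarrow> (('a \<Rightarrow> real) \<Rightarrow> ('a \<Rightarrow> real)) \<Rightarrow> (real \<times> 'a) set" where
  "flow_domain S C X = {(t, x). x \<in> S \<and> t \<in> flow_dom S C X x}"

definition slice :: "'a set \<Rightarrow> ('a \<Rightarrow> real) set \<Rightarrow> (('a \<Rightarrow> real) \<Rightarrow> ('a \<Rightarrow> real)) \<Rightarrow> real \<Rightarrow> 'a set" where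
  "slice S C X t = {x \<in> S. t \<in> flow_dom S C X x}"

definition vector_field :: "'a set \<Rightarrow> ('a \<Rightarrow> real) set \<Rightarrow> (('a \<Rightarrow> real) \<Rightarrow> ('a \<Rightarrow> real)) \<Rightarrow> bool" where
  "vector_field S C X \<longleftrightarrow> derivation S C X \<and>
     (\<forall>x\<in>S. \<exists>I c. max_int_curve S C X x I c) \<and>
     openin (prod_topology euclideanreal (dtop S C)) (flow_domain S C X) \<and>
     (\<forall>t. openin (dtop S C) (slice S C X t) \<and>
          diffeo (slice S C X t) (subspace_fns S C (slice S C X t))
                 (slice S C X (-t)) (subspace_fns S C (slice S C X (-t))) (flow S C X t))"

definition Vect :: "'a set \<Rightarrow> ('a \<Rightarrow> real) set \<Rightarrow> (('a \<Rightarrow> real) \<Rightarrow> ('a \<Rightarrow> real)) set" where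
  "Vect S C = {X. vector_field S C X}"

definition lie_subalgebra :: "'a set \<Rightarrow> ('a \<Rightarrow> real) set \<Rightarrow> (('a \<Rightarrow> real) \<Rightarrow> ('a \<Rightarrow> real)) set \<Rightarrow> bool" where
  "lie_subalgebra S C A \<longleftrightarrow> A \<subseteq> Vect S C \<and> (\<lambda>f. \<lambda>_. 0) \<in> A \<and>
     (\<forall>X\<in>A. \<forall>Y\<in>A. (\<lambda>f. \<lambda>x. X f x + Y f x) \<in> A) \<and>
     (\<forall>X\<in>A. \<forall>c. (\<lambda>f. \<lambda>x. c * X f x) \<in> A) \<and>
     (\<forall>X\<in>A. \<forall>Y\<in>A. (\<lambda>f. if f \<in> C then (\<lambda>x. X (Y f) x - Y (X f) x) else (\<lambda>_. 0)) \<in> A)"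

text \<open>(exp(tX)_* Y) at x (meaningful for x in slice S C X (-t)); the local function
  f o exp(tX) is replaced by a global function agreeing with it near exp(-tX) x.\<close>
definition push :: "'a set \<Rightarrow> ('a \<Rightarrow> real) set \<Rightarrow> (('a \<Rightarrow> real) \<Rightarrow> ('a \<Rightarrow> real)) \<Rightarrow> (('a \<Rightarrow> real) \<Rightarrow> ('a \<Rightarrow> real)) \<Rightarrow> real \<Rightarrow> 'a \<Rightarrow> ('a \<Rightarrow> real) \<Rightarrow> real" where
  "push S C X Y t x = (let p = flow S C X (-t) x in
     (\<lambda>f. if f \<in> C then Y (SOME g. g \<in> C \<and> (\<exists>W. openin (dtop S C) W \<and> p \<in> W \<and>
              W \<subseteq> slice S C X t \<and> (\<forall>z\<in>W. g z = f (flow S C X t z)))) p else 0))"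

definition locally_complete :: "'a set \<Rightarrow> ('a \<Rightarrow> real) set \<Rightarrow> (('a \<Rightarrow> real) \<Rightarrow> ('a \<Rightarrow> real)) set \<Rightarrow> bool" where
  "locally_complete S C F \<longleftrightarrow> (\<forall>X\<in>F. \<forall>Y\<in>F. \<forall>x t. x \<in> slice S C X (-t) \<longrightarrow>
     (\<exists>U. openin (dtop S C) U \<and> x \<in> U \<and> U \<subseteq> slice S C X (-t) \<and>
          (\<exists>Z\<in>F. \<forall>z\<in>U. push S C X Y t z = vat C Z z)))"

definition orb_tangent :: "('a \<Rightarrow> real) set \<Rightarrow> (('a \<Rightarrow> real) \<Rightarrow> ('a \<Rightarrow> real)) set \<Rightarrow> 'a \<Rightarrow> (('a \<Rightarrow> real) \<Rightarrow> real) set" where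
  "orb_tangent C A y = {v. \<exists>(m::nat) c Xs. (\<forall>i<m. Xs i \<in> A) \<and>
      v = (\<lambda>f. \<Sum>i<m. c i * vat C (Xs i) y f)}"

text \<open>Components of phi_* v in R^n: v applied to the coordinate functions of phi
  (replaced by global functions agreeing with them near y).\<close>
definition pushvec :: "'a set \<Rightarrow> ('a \<Rightarrow> real) set \<Rightarrow> 'a set \<Rightarrow> ('a \<Rightarrow> nat \<Rightarrow> real) \<Rightarrow> nat \<Rightarrow> 'a \<Rightarrow> (('a \<Rightarrow> real) \<Rightarrow> real) \<Rightarrow> nat \<Rightarrow> real" where
  "pushvec S C U \<phi> n y v = (\<lambda>i. if i < n then
      v (SOME g. g \<in> C \<and> (\<exists>W. openin (dtop S C) W \<and> y \<in> W \<and> W \<subseteq> U \<and> (\<forall>z\<in>W. g z = \<phi> z i)))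
      else 0)"

text \<open>alt k I w = coefficient of w_0 /\ ... /\ w_(k-1) at e_(I 0) (x) ... (x) e_(I (k-1)),
  i.e. the determinant of the k x k matrix (w_j (I l)).\<close>
definition alt :: "nat \<Rightarrow> (nat \<Rightarrow> nat) \<Rightarrow> (nat \<Rightarrow> nat \<Rightarrow> real) \<Rightarrow> real" where
  "alt k I w = (\<Sum>\<sigma> | \<sigma> permutes {..<k}. of_int (sign \<sigma>) * (\<Prod>j<k. w (\<sigma> j) (I j)))"

definition digits :: "nat \<Rightarrow> nat \<Rightarrow> nat \<Rightarrow> nat \<Rightarrow> nat" where
  "digits n k m = (\<lambda>l. if l < k then m div n ^ l mod n else 0)"

text \<open>Coordinates of (p, w_0 /\ ... /\ w_(k-1)) in R^n x (R^n)^(tensor k) = R^(n + n^k);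
  this embeds the bundle of k-vectors of R^n as a linear subbundle.\<close>
definition wedge_coords :: "nat \<Rightarrow> nat \<Rightarrow> (nat \<Rightarrow> real) \<Rightarrow> (nat \<Rightarrow> nat \<Rightarrow> real) \<Rightarrow> nat \<Rightarrow> real" where
  "wedge_coords n k p w = (\<lambda>j. if j < n then p j
      else if j < n + n ^ k then alt k (digits n k (j - n)) w else 0)"

definition incr :: "nat \<Rightarrow> nat \<Rightarrow> (nat \<Rightarrow> nat) set" where
  "incr n k = {I. (\<forall>j<k. I j < n) \<and> (\<forall>j. Suc j < k \<longrightarrow> I j < I (Suc j)) \<and> (\<forall>j\<ge>k. I j = 0)}"

text \<open>A smooth k-form on R^n given by its coefficients a_I, I strictly increasing.\<close>
definition diff_form :: "nat \<Rightarrow> nat \<Rightarrow> ((nat \<Rightarrow> nat) \<Rightarrow> (nat \<Rightarrow> real) \<Rightarrow> real) \<Rightarrow> bool" where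
  "diff_form n k a \<longleftrightarrow> (\<forall>I\<in>incr n k. smooth_Rn n (a I))"

definition form_eval :: "nat \<Rightarrow> nat \<Rightarrow> ((nat \<Rightarrow> nat) \<Rightarrow> (nat \<Rightarrow> real) \<Rightarrow> real) \<Rightarrow> (nat \<Rightarrow> real) \<Rightarrow> (nat \<Rightarrow> nat \<Rightarrow> real) \<Rightarrow> real" where
  "form_eval n k a p w = (\<Sum>I\<in>incr n k. a I p * alt k I w)"

definition orbital_form :: "'a set \<Rightarrow> ('a \<Rightarrow> real) set \<Rightarrow> (('a \<Rightarrow> real) \<Rightarrow> ('a \<Rightarrow> real)) set \<Rightarrow> nat \<Rightarrow>
    ('a \<Rightarrow> (nat \<Rightarrow> ('a \<Rightarrow> real) \<Rightarrow> real) \<Rightarrow> real) \<Rightarrow> bool" where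
  "orbital_form S C A k \<mu> \<longleftrightarrow>
     (\<forall>y\<in>S. (\<forall>v j u c. (\<forall>i<k. v i \<in> orb_tangent C A y) \<and> j < k \<and> u \<in> orb_tangent C A y \<longrightarrow>
                \<mu> y (v(j := (\<lambda>f. v j f + c * u f))) = \<mu> y v + c * \<mu> y (v(j := u))) \<and>
            (\<forall>v. (\<forall>i<k. v i \<in> orb_tangent C A y) \<and> (\<exists>i j. i < k \<and> j < k \<and> i \<noteq> j \<and> v i = v j)
                \<longrightarrow> \<mu> y v = 0)) \<and>
     (\<forall>x\<in>S. \<exists>U \<phi> n f. x \<in> U \<and> chart S C U \<phi> n \<and> smooth_Rn (n + n ^ k) f \<and>
        (\<forall>y\<in>U. \<forall>v. (\<forall>j<k. v j \<in> orb_tangent C A y) \<longrightarrow>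
           \<mu> y v = f (wedge_coords n k (\<phi> y) (\<lambda>j. pushvec S C U \<phi> n y (v j)))))"

end

theory Submission
  imports Defs
begin

lemma alt_cong: "(\<And>j. j < k \<Longrightarrow> J j = J' j) \<Longrightarrow> alt k J w = alt k J' w"
  unfolding alt_def by (intro sum.cong refl) (auto intro!: prod.cong)

lemma alt_permute:
  assumes s: "\<sigma> permutes {..<k}"
  shows "alt k (\<lambda>j. I (\<sigma> j)) w = of_int (sign \<sigma>) * alt k I w"
proof -
  have "alt k (\<lambda>j. I (\<sigma> j)) w = (\<Sum>\<tau> | \<tau> permutes {..<k}. of_int (sign \<tau>) * (\<Prod>l<k. w ((\<tau> \<circ> inv \<sigma>) l) (I l)))"
    unfolding alt_def
  proof (intro sum.cong refl)
    fix \<tau> assume "\<tau> \<in> {\<tau>. \<tau> permutes {..<k}}"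
    have "(\<Prod>l<k. w ((\<tau> \<circ> inv \<sigma>) l) (I l)) = (\<Prod>j<k. w ((\<tau> \<circ> inv \<sigma>) (\<sigma> j)) (I (\<sigma> j)))"
      using prod.permute[OF s, of "\<lambda>l. w ((\<tau> \<circ> inv \<sigma>) l) (I l)"] by (simp add: o_def)
    also have "\<dots> = (\<Prod>j<k. w (\<tau> j) (I (\<sigma> j)))"
      by (simp add: permutes_inverses[OF s])
    finally show "of_int (sign \<tau>) * (\<Prod>j<k. w (\<tau> j) (I (\<sigma> j))) = of_int (sign \<tau>) * (\<Prod>l<k. w ((\<tau> \<circ> inv \<sigma>) l) (I l))"
      by simp
  qed
  also have "\<dots> = (\<Sum>\<rho> | \<rho> permutes {..<k}. of_int (sign (\<rho> \<circ> \<sigma>)) * (\<Prod>l<k. w ((\<rho> \<circ> \<sigma> \<circ> inv \<sigma>) l) (I l)))"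
    by (subst sum_permutations_compose_right[OF s]) simp
  also have "\<dots> = (\<Sum>\<rho> | \<rho> permutes {..<k}. of_int (sign \<sigma>) * (of_int (sign \<rho>) * (\<Prod>l<k. w (\<rho> l) (I l))))"
  proof (intro sum.cong refl)
    fix \<rho> assume r: "\<rho> \<in> {\<rho>. \<rho> permutes {..<k}}"
    have "sign (\<rho> \<circ> \<sigma>) = sign \<rho> * sign \<sigma>"
      using r s by (intro sign_compose) (auto simp: permutation_permutes)
    moreover have "\<rho> \<circ> \<sigma> \<circ> inv \<sigma> = \<rho>"
      using permutes_inv_o[OF s] by (simp add: o_assoc[symmetric])
    ultimately show "of_int (sign (\<rho> \<circ> \<sigma>)) * (\<Prod>l<k. w ((\<rho> \<circ> \<sigma> \<circ> inv \<sigma>) l) (I l)) = of_int (sign \<sigma>) * (of_int (sign \<rho>) * (\<Prod>l<k. w (\<rho> l) (I l)))"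
      by simp
  qed
  also have "\<dots> = of_int (sign \<sigma>) * alt k I w"
    unfolding alt_def by (simp add: sum_distrib_left)
  finally show ?thesis .
qed

lemma alt_repeat:
  assumes "a < k" "b < k" "a \<noteq> b" "I a = I b"
  shows "alt k I w = 0"
proof -
  have "alt k I w = alt k (\<lambda>j. I (Transposition.transpose a b j)) w"
    using assms by (intro alt_cong) (auto simp: Transposition.transpose_def)
  also have "\<dots> = - alt k I w"
    using assms by (subst alt_permute) (auto simp: permutes_swap_id sign_swap_id)
  finally show ?thesis by simp
qed

lemma alt_scale:
  assumes "0 < k"
  shows "alt k I (w(0 := (\<lambda>i. t * w 0 i))) = t * alt k I w"
  unfolding alt_def sum_distrib_left
proof (intro sum.cong refl)
  fix \<tau> assume "\<tau> \<in> {\<tau>. \<tau> permutes {..<k}}"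
  hence p: "\<tau> permutes {..<k}" by simp
  define j0 where "j0 = inv \<tau> 0"
  have j0: "j0 < k" "\<tau> j0 = 0"
    using assms permutes_inverses[OF p] permutes_inv[OF p] unfolding j0_def
    by (auto dest: permutes_in_image)
  have ne: "\<tau> j \<noteq> 0" if "j \<noteq> j0" for j
    using that j0 permutes_inj[OF p] by (metis injD)
  have "(\<Prod>j<k. (w(0 := (\<lambda>i. t * w 0 i))) (\<tau> j) (I j)) = (w(0 := (\<lambda>i. t * w 0 i))) (\<tau> j0) (I j0) * (\<Prod>j\<in>{..<k}-{j0}. (w(0 := (\<lambda>i. t * w 0 i))) (\<tau> j) (I j))"
    using j0 by (subst prod.remove[of _ j0]) auto
  also have "\<dots> = t * (w (\<tau> j0) (I j0) * (\<Prod>j\<in>{..<k}-{j0}. w (\<tau> j) (I j)))"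
  proof -
    have "(\<Prod>j\<in>{..<k}-{j0}. (w(0 := (\<lambda>i. t * w 0 i))) (\<tau> j) (I j)) = (\<Prod>j\<in>{..<k}-{j0}. w (\<tau> j) (I j))"
      by (rule prod.cong) (use ne in force)+
    then show ?thesis using j0 by simp
  qed
  also have "\<dots> = t * (\<Prod>j<k. w (\<tau> j) (I j))"
    using j0 by (subst prod.remove[of _ j0, symmetric]) auto
  finally show "of_int (sign \<tau>) * (\<Prod>j<k. (w(0 := (\<lambda>i. t * w 0 i))) (\<tau> j) (I j)) = t * (of_int (sign \<tau>) * (\<Prod>j<k. w (\<tau> j) (I j)))"
    by simp
qed

lemma alt_reduce:
  assumes J: "\<forall>j<k. J j < n"
  shows "(\<forall>w. alt k J w = 0) \<or> (\<exists>I\<in>incr n k. \<exists>s. \<forall>w. alt k J w = s * alt k I w)"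
proof (cases "inj_on J {..<k}")
  case False
  then obtain a b where "a < k" "b < k" "a \<noteq> b" "J a = J b"
    unfolding inj_on_def by auto
  then show ?thesis using alt_repeat by blast
next
  case True
  define L where "L = sorted_list_of_set (J ` {..<k})"
  have lenL: "length L = k"
    unfolding L_def using True by (simp add: card_image)
  have setL: "set L = J ` {..<k}" unfolding L_def by simp
  have sw: "sorted_wrt (<) L" unfolding L_def by (rule strict_sorted_list_of_set)
  have dL: "distinct L" unfolding L_def by simp
  define I where "I = (\<lambda>j. if j < k then L ! j else 0)"
  define \<sigma> where "\<sigma> = (\<lambda>j. if j < k then (THE i. i < k \<and> L ! i = J j) else j)"
  have the\<sigma>: "\<sigma> j < k \<and> L ! (\<sigma> j) = J j" if "j < k" for j
  proof -
    have "J j \<in> set L" using setL that by auto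
    then obtain i where i: "i < k" "L ! i = J j" using lenL by (auto simp: in_set_conv_nth)
    have "\<exists>!i. i < k \<and> L ! i = J j"
      using i dL lenL nth_eq_iff_index_eq[of L] by (intro ex1I[of _ i]) (auto, metis)
    from theI'[OF this] show ?thesis unfolding \<sigma>_def using that by simp
  qed
  have Iin: "I \<in> incr n k"
    unfolding incr_def
  proof (intro CollectI conjI allI impI)
    fix j assume "j < k"
    then have "L ! j \<in> set L" using lenL by simp
    then show "I j < n" using J \<open>j < k\<close> setL unfolding I_def by auto
  next
    fix j assume "Suc j < k"
    then show "I j < I (Suc j)" unfolding I_def using sw lenL
      by (auto simp: sorted_wrt_iff_nth_less)
  next
    fix j :: nat assume "k \<le> j" then show "I j = 0" unfolding I_def by simp
  qed
  have sig_lt: "\<sigma> j < k" if "j < k" for j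
    using the\<sigma>[OF that] by simp
  have IJ: "I (\<sigma> j) = J j" if "j < k" for j
    using the\<sigma>[OF that] unfolding I_def by simp
  have inj\<sigma>: "inj_on \<sigma> {..<k}"
  proof (rule inj_onI)
    fix a b assume ab: "a \<in> {..<k}" "b \<in> {..<k}" "\<sigma> a = \<sigma> b"
    then have "J a = J b" using IJ by (metis lessThan_iff)
    then show "a = b" using True ab unfolding inj_on_def by blast
  qed
  have perm: "\<sigma> permutes {..<k}"
  proof (rule bij_imp_permutes)
    have "\<sigma> ` {..<k} \<subseteq> {..<k}" using sig_lt by auto
    then show "bij_betw \<sigma> {..<k} {..<k}"
      using inj\<sigma> by (simp add: bij_betw_def endo_inj_surj)
  next
    fix x assume "x \<notin> {..<k}" then show "\<sigma> x = x" unfolding \<sigma>_def by simp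
  qed
  have "\<forall>w. alt k J w = of_int (sign \<sigma>) * alt k I w"
  proof
    fix w
    have "alt k J w = alt k (\<lambda>j. I (\<sigma> j)) w" by (rule alt_cong) (simp add: IJ)
    then show "alt k J w = of_int (sign \<sigma>) * alt k I w" using alt_permute[OF perm] by simp
  qed
  then show ?thesis using Iin by blast
qed

lemma finite_incr: "finite (incr n k)"
proof -
  have "incr n k \<subseteq> (\<lambda>g j. if j < k then g j else 0) ` ({..<k} \<rightarrow>\<^sub>E {..<n})"
  proof
    fix I assume I: "I \<in> incr n k"
    then have "I = (\<lambda>j. if j < k then restrict I {..<k} j else 0)"
      unfolding incr_def by (auto simp: fun_eq_iff)
    moreover have "restrict I {..<k} \<in> {..<k} \<rightarrow>\<^sub>E {..<n}" using I unfolding incr_def by auto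
    ultimately show "I \<in> (\<lambda>g j. if j < k then g j else 0) ` ({..<k} \<rightarrow>\<^sub>E {..<n})" by blast
  qed
  then show ?thesis by (rule finite_subset) (auto intro: finite_PiE)
qed

lemma digits_lt: "0 < n \<Longrightarrow> \<forall>j<k. digits n k m j < n"
  unfolding digits_def by auto


lemma smooth_cont: "smooth_Rn n g \<Longrightarrow> continuous_on (Rn n) g"
  by (erule smooth_Rn.cases) simp

lemma smooth_partial:
  assumes "smooth_Rn n g" "i < n"
  shows "\<exists>D. (\<forall>x\<in>Rn n. ((\<lambda>t. g (x(i := x i + t))) has_real_derivative D x) (at 0)) \<and> smooth_Rn n D"
  using assms by (cases rule: smooth_Rn.cases) auto

lemma smooth_lin:
  assumes "smooth_Rn n f" "smooth_Rn n g"
  shows "smooth_Rn n (\<lambda>x. c * f x + d * g x)"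
proof -
  define X where "X = (\<lambda>h. \<exists>c d f g. smooth_Rn n f \<and> smooth_Rn n g \<and> h = (\<lambda>x. c * f x + d * g x))"
  have "X (\<lambda>x. c * f x + d * g x)" unfolding X_def using assms by blast
  then show ?thesis
  proof (coinduct rule: smooth_Rn.coinduct[of X])
    case (smooth_Rn h)
    then obtain c d f g where fg: "smooth_Rn n f" "smooth_Rn n g" "h = (\<lambda>x. c * f x + d * g x)"
      unfolding X_def by blast
    have "continuous_on (Rn n) h"
      unfolding fg(3) using smooth_cont[OF fg(1)] smooth_cont[OF fg(2)]
      by (intro continuous_intros)
    moreover have "\<forall>i<n. \<exists>D. (\<forall>x\<in>Rn n. ((\<lambda>t. h (x(i := x i + t))) has_real_derivative D x) (at 0)) \<and> (X D \<or> smooth_Rn n D)"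
    proof (intro allI impI)
      fix i assume i: "i < n"

      obtain Df where Df: "\<forall>x\<in>Rn n. ((\<lambda>t. f (x(i := x i + t))) has_real_derivative Df x) (at 0)" "smooth_Rn n Df"
        using smooth_partial[OF fg(1) i] by blast
      obtain Dg where Dg: "\<forall>x\<in>Rn n. ((\<lambda>t. g (x(i := x i + t))) has_real_derivative Dg x) (at 0)" "smooth_Rn n Dg"
        using smooth_partial[OF fg(2) i] by blast
      have "\<forall>x\<in>Rn n. ((\<lambda>t. h (x(i := x i + t))) has_real_derivative (c * Df x + d * Dg x)) (at 0)"
      proof
        fix x assume "x \<in> Rn n"
        then show "((\<lambda>t. h (x(i := x i + t))) has_real_derivative (c * Df x + d * Dg x)) (at 0)"
          unfolding fg(3) using Df(1) Dg(1) by (intro DERIV_add DERIV_cmult) auto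
      qed
      moreover have "X (\<lambda>x. c * Df x + d * Dg x)" unfolding X_def using Df(2) Dg(2) by blast
      ultimately show "\<exists>D. (\<forall>x\<in>Rn n. ((\<lambda>t. h (x(i := x i + t))) has_real_derivative D x) (at 0)) \<and> (X D \<or> smooth_Rn n D)"
        by (intro exI[of _ "\<lambda>x. c * Df x + d * Dg x"] conjI disjI1)
    qed
    ultimately show ?case by (intro exI[of _ h]) simp
  qed
qed

lemma smooth_const0: "smooth_Rn n (\<lambda>_. 0)"
proof (rule smooth_Rn.coinduct[of "\<lambda>h. h = (\<lambda>_. 0)"])
  show "(\<lambda>_. 0) = (\<lambda>_::nat\<Rightarrow>real. 0::real)" by simp
next
    fix h :: "(nat \<Rightarrow> real) \<Rightarrow> real" assume h: "h = (\<lambda>_. 0)"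
    have "\<forall>x\<in>Rn n. ((\<lambda>t. h (x(i := x i + t))) has_real_derivative 0) (at 0)" for i
      unfolding h by simp
    then show "\<exists>g. h = g \<and> continuous_on (Rn n) g \<and> (\<forall>x<n. \<exists>D. (\<forall>xa\<in>Rn n. ((\<lambda>t. g (xa(x := xa x + t))) has_real_derivative D xa) (at 0)) \<and> (D = (\<lambda>_. 0) \<or> smooth_Rn n D))"
      unfolding h by (auto simp: continuous_on_const intro!: exI[of _ "\<lambda>_. 0"])
qed

lemma smooth_sum:
  assumes "finite A" "\<forall>i\<in>A. smooth_Rn n (g i)"
  shows "smooth_Rn n (\<lambda>x. \<Sum>i\<in>A. c i * g i x)"
  using assms
proof (induction A rule: finite_induct)
  case empty then show ?case by (simp add: smooth_const0)
next
  case (insert a A)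
  have "smooth_Rn n (\<lambda>x. c a * g a x + 1 * (\<Sum>i\<in>A. c i * g i x))"
    using insert by (intro smooth_lin) auto
  moreover have "(\<lambda>x. \<Sum>i\<in>insert a A. c i * g i x) = (\<lambda>x. c a * g a x + 1 * (\<Sum>i\<in>A. c i * g i x))"
    using insert(1,2) by (simp add: fun_eq_iff)
  ultimately show ?case by simp
qed

definition emb :: "nat \<Rightarrow> (nat \<Rightarrow> real) \<Rightarrow> (nat \<Rightarrow> real) \<Rightarrow> (nat \<Rightarrow> real)" where
  "emb n c p = (\<lambda>j. if j < n then p j else c j)"

lemma emb_cont: "continuous_on UNIV (emb n c)"
  unfolding emb_def
proof (intro continuous_on_coordinatewise_then_product)
  fix i show "continuous_on UNIV (\<lambda>x. if i < n then x i else c i)"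
    by (cases "i < n") (simp_all add: continuous_on_const)
qed

lemma emb_Rn: "n \<le> N \<Longrightarrow> c \<in> Rn N \<Longrightarrow> emb n c p \<in> Rn N"
  unfolding emb_def Rn_def by auto

lemma smooth_emb:
  assumes "smooth_Rn N g" "n \<le> N" "c \<in> Rn N"
  shows "smooth_Rn n (\<lambda>p. g (emb n c p))"
proof -
  define X where "X = (\<lambda>h. \<exists>g. smooth_Rn N g \<and> h = (\<lambda>p. g (emb n c p)))"
  have "X (\<lambda>p. g (emb n c p))" unfolding X_def using assms by blast
  then show ?thesis
  proof (coinduct rule: smooth_Rn.coinduct[of X])
    case (smooth_Rn h)
    then obtain g where g: "smooth_Rn N g" "h = (\<lambda>p. g (emb n c p))"
      unfolding X_def by blast
    have "continuous_on (Rn n) h"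
      unfolding g(2) using smooth_cont[OF g(1)] emb_Rn[OF assms(2,3)]
      by (intro continuous_on_compose2[OF _ continuous_on_subset[OF emb_cont]]) auto
    moreover have "\<forall>i<n. \<exists>D. (\<forall>x\<in>Rn n. ((\<lambda>t. h (x(i := x i + t))) has_real_derivative D x) (at 0)) \<and> (X D \<or> smooth_Rn n D)"
    proof (intro allI impI)
      fix i assume i: "i < n"

      obtain Dg where Dg: "\<forall>x\<in>Rn N. ((\<lambda>t. g (x(i := x i + t))) has_real_derivative Dg x) (at 0)" "smooth_Rn N Dg"
        using smooth_partial[OF g(1) less_le_trans[OF i assms(2)]] by blast
      have e: "emb n c (x(i := x i + t)) = (emb n c x)(i := emb n c x i + t)" for x t
        using i unfolding emb_def by (auto simp: fun_eq_iff)
      have "\<forall>x\<in>Rn n. ((\<lambda>t. h (x(i := x i + t))) has_real_derivative Dg (emb n c x)) (at 0)"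
        unfolding g(2) e using Dg(1) emb_Rn[OF assms(2,3)] by blast
      moreover have "X (\<lambda>x. Dg (emb n c x))" unfolding X_def using Dg(2) by blast
      ultimately show "\<exists>D. (\<forall>x\<in>Rn n. ((\<lambda>t. h (x(i := x i + t))) has_real_derivative D x) (at 0)) \<and> (X D \<or> smooth_Rn n D)"
        by (intro exI[of _ "\<lambda>x. Dg (emb n c x)"] conjI disjI1)
    qed
    ultimately show ?case by (intro exI[of _ h]) simp
  qed
qed


lemma mvt_sym:
  fixes h :: "real \<Rightarrow> real"
  assumes "\<And>s. (h has_real_derivative h' s) (at s)"
  shows "\<exists>\<xi>. \<bar>\<xi>\<bar> \<le> \<bar>r\<bar> \<and> h r - h 0 = r * h' \<xi>"
proof (cases "r = 0")
  case True then show ?thesis by (intro exI[of _ 0]) simp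
next
  case False
  show ?thesis
  proof (cases "0 < r")
    case True
    have "\<exists>z. 0 < z \<and> z < r \<and> h r - h 0 = (r - 0) * h' z"
      by (rule MVT2[of 0 r h h', OF True assms])
    then obtain z where "0 < z" "z < r" "h r - h 0 = (r - 0) * h' z" by blast
    then show ?thesis by (intro exI[of _ z]) auto
  next
    case False
    with \<open>r \<noteq> 0\<close> have "r < 0" by simp
    have "\<exists>z. r < z \<and> z < 0 \<and> h 0 - h r = (0 - r) * h' z"
      by (rule MVT2[of r 0 h h', OF \<open>r < 0\<close> assms])
    then obtain z where "r < z" "z < 0" "h 0 - h r = (0 - r) * h' z" by blast
    then show ?thesis by (intro exI[of _ z]) auto
  qed
qed

lemma Phi_cont: "continuous_on UNIV (\<lambda>(t::real, s::real). (\<lambda>j::nat. x j + t * E' j + (if j = m then s else (0::real))))"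
proof (intro continuous_on_coordinatewise_then_product)
  fix j
  show "continuous_on UNIV (\<lambda>p. (case p of (t::real, s::real) \<Rightarrow> \<lambda>j. x j + t * E' j + (if j = m then s else 0)) j)"
    by (cases "j = m") (auto simp: case_prod_beta' intro!: continuous_intros)
qed

locale smf =
  fixes N :: nat and f :: "(nat \<Rightarrow> real) \<Rightarrow> real" and D :: "nat \<Rightarrow> (nat \<Rightarrow> real) \<Rightarrow> real"
  assumes Dh: "\<And>i. i < N \<Longrightarrow> (\<forall>x\<in>Rn N. ((\<lambda>t. f (x(i := x i + t))) has_real_derivative D i x) (at 0)) \<and> smooth_Rn N (D i)"
begin

lemma partial_at:
  assumes "y \<in> Rn N" "i < N"
  shows "((\<lambda>s. f (y(i := y i + s))) has_real_derivative D i (y(i := y i + s))) (at s)"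
proof -
  have y': "y(i := y i + s) \<in> Rn N" using assms unfolding Rn_def by auto
  have "((\<lambda>t. f ((y(i := y i + s))(i := (y(i := y i + s)) i + t))) has_real_derivative D i (y(i := y i + s))) (at 0)"
    using Dh[OF assms(2)] y' by blast
  moreover have "(\<lambda>t. f ((y(i := y i + s))(i := (y(i := y i + s)) i + t))) = (\<lambda>t. f (y(i := y i + (t + s))))"
    by (simp add: ac_simps)
  ultimately have "((\<lambda>t. f (y(i := y i + (t + s)))) has_real_derivative D i (y(i := y i + s))) (at 0)" by simp
  then show ?thesis using DERIV_shift[of "\<lambda>s. f (y(i := y i + s))" _ 0 s] by simp
qed

lemma dir_deriv:
  assumes "m \<le> N" "x \<in> Rn N" "E \<in> Rn m"
  shows "((\<lambda>t. f (\<lambda>j. x j + t * E j)) has_real_derivative (\<Sum>i<m. E i * D i x)) (at 0)"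
  using assms
proof (induction m arbitrary: E)
  case 0
  then have "E = (\<lambda>_. 0)" unfolding Rn_def by auto
  then show ?case by simp
next
  case (Suc m)
  define E' where "E' = E(m := 0)"
  have E'R: "E' \<in> Rn m" using Suc.prems(3) unfolding E'_def Rn_def by auto
  have IH: "((\<lambda>t. f (\<lambda>j. x j + t * E' j)) has_real_derivative (\<Sum>i<m. E' i * D i x)) (at 0)"
    using Suc.IH[OF _ Suc.prems(2) E'R] Suc.prems(1) by simp
  have sumE': "(\<Sum>i<m. E' i * D i x) = (\<Sum>i<m. E i * D i x)" unfolding E'_def by (intro sum.cong) auto
  define F where "F = (\<lambda>t. f (\<lambda>j. x j + t * E j))"
  define G where "G = (\<lambda>t. f (\<lambda>j. x j + t * E' j))"
  define \<Phi> where "\<Phi> = (\<lambda>(t::real, s::real). (\<lambda>j. x j + t * E' j + (if j = m then s else 0)))"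
  have mN: "m < N" using Suc.prems(1) by simp
  have yR: "(\<lambda>j. x j + t * E' j) \<in> Rn N" for t
    using Suc.prems(2) E'R \<open>m < N\<close> unfolding Rn_def by auto
  have PhiR: "\<Phi> p \<in> Rn N" for p
    using Suc.prems(2) E'R \<open>m < N\<close> unfolding Rn_def \<Phi>_def by (auto split: prod.splits)
  have step: "\<exists>\<xi>. \<bar>\<xi>\<bar> \<le> \<bar>t * E m\<bar> \<and> F t - G t = t * E m * D m (\<Phi> (t, \<xi>))" for t
  proof -
    let ?y = "\<lambda>j. x j + t * E' j"
    have ym: "?y m = x m" unfolding E'_def by simp
    have "\<exists>\<xi>. \<bar>\<xi>\<bar> \<le> \<bar>t * E m\<bar> \<and>
      f (?y(m := ?y m + t * E m)) - f (?y(m := ?y m + 0)) = t * E m * D m (?y(m := ?y m + \<xi>))"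
      by (rule mvt_sym[of "\<lambda>s. f (?y(m := ?y m + s))" "\<lambda>s. D m (?y(m := ?y m + s))" "t * E m"])
        (rule partial_at[OF yR mN])
    then obtain \<xi> where \<xi>: "\<bar>\<xi>\<bar> \<le> \<bar>t * E m\<bar>"
      "f (?y(m := ?y m + t * E m)) - f (?y(m := ?y m + 0)) = t * E m * D m (?y(m := ?y m + \<xi>))"
      by (elim exE conjE)
    have e1: "?y(m := ?y m + t * E m) = (\<lambda>j. x j + t * E j)"
      by (rule ext) (simp add: E'_def)
    have e2: "?y(m := ?y m + 0) = ?y" by (simp add: fun_eq_iff)
    have e3: "?y(m := ?y m + \<xi>) = \<Phi> (t, \<xi>)"
      by (rule ext) (simp add: \<Phi>_def E'_def)
    have "F t - G t = t * E m * D m (\<Phi> (t, \<xi>))"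
      using \<xi>(2) unfolding e1 e2 e3 F_def G_def .
    then show ?thesis using \<xi>(1) by blast
  qed
  have "\<forall>t. \<exists>\<xi>. \<bar>\<xi>\<bar> \<le> \<bar>t * E m\<bar> \<and> F t - G t = t * E m * D m (\<Phi> (t, \<xi>))"
    by (rule allI) (rule step)
  from choice[OF this] obtain \<xi> where \<xi>': "\<forall>t. \<bar>\<xi> t\<bar> \<le> \<bar>t * E m\<bar> \<and> F t - G t = t * E m * D m (\<Phi> (t, \<xi> t))" ..
  have \<xi>: "\<bar>\<xi> t\<bar> \<le> \<bar>t * E m\<bar> \<and> F t - G t = t * E m * D m (\<Phi> (t, \<xi> t))" for t
    using \<xi>' by (rule spec)
  have Phi0: "\<Phi> (0, 0) = x" unfolding \<Phi>_def by simp
  have contPhi: "continuous_on UNIV \<Phi>"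
    unfolding \<Phi>_def by (rule Phi_cont)
  have contD: "continuous_on UNIV (\<lambda>p. D m (\<Phi> p))"
    by (rule continuous_on_compose2[OF smooth_cont[OF conjunct2[OF Dh[OF mN]]] contPhi]) (use PhiR in blast)
  have limD: "((\<lambda>t. D m (\<Phi> (t, \<xi> t))) \<longlongrightarrow> D m x) (at 0)"
    unfolding tendsto_iff
  proof (intro allI impI)
    fix e :: real assume e: "e > 0"
    obtain d where d: "d > 0" "\<And>p. dist p (0, 0) < d \<Longrightarrow> dist (D m (\<Phi> p)) (D m x) < e"
      using continuous_on_iff[THEN iffD1, OF contD, rule_format, OF UNIV_I e, of "(0, 0)"] unfolding Phi0 by blast
    show "\<forall>\<^sub>F t in at 0. dist (D m (\<Phi> (t, \<xi> t))) (D m x) < e"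
      unfolding eventually_at
    proof (intro exI[of _ "d / (1 + \<bar>E m\<bar>)"] conjI ballI impI)
      show "0 < d / (1 + \<bar>E m\<bar>)" using d(1) by (simp add: add_pos_nonneg)
    next
      fix t :: real assume t: "t \<noteq> 0 \<and> dist t 0 < d / (1 + \<bar>E m\<bar>)"
      have "dist (t, \<xi> t) (0, 0) = sqrt ((t)\<^sup>2 + (\<xi> t)\<^sup>2)" by (simp add: dist_Pair_Pair dist_real_def)
      also have "\<dots> \<le> \<bar>t\<bar> + \<bar>\<xi> t\<bar>" by (rule sqrt_sum_squares_le_sum_abs)
      also have "\<dots> \<le> \<bar>t\<bar> * (1 + \<bar>E m\<bar>)" using conjunct1[OF \<xi>[of t]] by (simp add: abs_mult distrib_left)
      also have "\<dots> < d"
      proof -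
        have c: "0 < 1 + \<bar>E m\<bar>" by (simp add: add_pos_nonneg)
        have "\<bar>t\<bar> < d / (1 + \<bar>E m\<bar>)" using t by (simp add: dist_real_def)
        then show ?thesis by (simp add: pos_less_divide_eq[OF c])
      qed
      finally show "dist (D m (\<Phi> (t, \<xi> t))) (D m x) < e" by (rule d(2))
    qed
  qed
  have F0: "F 0 = G 0" unfolding F_def G_def by simp
  have limG: "((\<lambda>y. (G y - G 0) / (y - 0)) \<longlongrightarrow> (\<Sum>i<m. E i * D i x)) (at 0)"
    using IH unfolding has_field_derivative_iff G_def sumE' by simp
  have "((\<lambda>y. (G y - G 0) / (y - 0) + E m * D m (\<Phi> (y, \<xi> y))) \<longlongrightarrow> (\<Sum>i<m. E i * D i x) + E m * D m x) (at 0)"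
    by (rule tendsto_add[OF limG tendsto_mult_left[OF limD]])
  moreover have "\<forall>\<^sub>F y in at 0. (G y - G 0) / (y - 0) + E m * D m (\<Phi> (y, \<xi> y)) = (F y - F 0) / (y - 0)"
    unfolding eventually_at
  proof (intro exI[of _ 1] conjI ballI impI)
    fix y :: real assume y: "y \<noteq> 0 \<and> dist y 0 < 1"
    have "F y - F 0 = (G y - G 0) + y * (E m * D m (\<Phi> (y, \<xi> y)))"
      using conjunct2[OF \<xi>[of y]] F0 by (simp add: algebra_simps)
    then have "(F y - F 0) / (y - 0) = ((G y - G 0) + y * (E m * D m (\<Phi> (y, \<xi> y)))) / y" by simp
    also have "\<dots> = (G y - G 0) / y + E m * D m (\<Phi> (y, \<xi> y))"
      using y by (simp add: add_divide_distrib)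
    finally show "(G y - G 0) / (y - 0) + E m * D m (\<Phi> (y, \<xi> y)) = (F y - F 0) / (y - 0)" by simp
  qed simp
  ultimately have "((\<lambda>y. (F y - F 0) / (y - 0)) \<longlongrightarrow> (\<Sum>i<m. E i * D i x) + E m * D m x) (at 0)"
    by (rule Lim_transform_eventually)
  moreover have eqS: "(\<Sum>i<Suc m. E i * D i x) = (\<Sum>i<m. E i * D i x) + E m * D m x" by simp
  ultimately have "((\<lambda>y. (F y - F 0) / (y - 0)) \<longlongrightarrow> (\<Sum>i<Suc m. E i * D i x)) (at 0)"
    by (simp only: eqS)
  then have "(F has_real_derivative (\<Sum>i<Suc m. E i * D i x)) (at 0)"
    by (simp only: has_field_derivative_iff)
  then show ?case by (simp only: F_def)
qed
end


lemma sum_split_nat: "(\<Sum>i<n+q. g i) = (\<Sum>i<n. g i) + (\<Sum>m<q. g (n+m))" for n q :: nat and g :: "nat \<Rightarrow> real"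
  by (induction q) simp_all

lemma dtop_subset: "openin (dtop S C) U \<Longrightarrow> U \<subseteq> S"
  unfolding dtop_def using openin_subset by fastforce

lemma orb_scale: "u \<in> orb_tangent C A y \<Longrightarrow> (\<lambda>f. t * u f) \<in> orb_tangent C A y"
proof -
  assume "u \<in> orb_tangent C A y"
  then obtain m c Xs where h: "\<forall>i<m. Xs i \<in> A" "u = (\<lambda>f. \<Sum>i<(m::nat). c i * vat C (Xs i) y f)"
    unfolding orb_tangent_def by (elim CollectE exE conjE) 
  have "(\<lambda>f. t * u f) = (\<lambda>f. \<Sum>i<m. (t * c i) * vat C (Xs i) y f)"
    unfolding h(2) by (simp only: sum_distrib_left mult.assoc)
  then show ?thesis unfolding orb_tangent_def using h(1) by (intro CollectI exI conjI)
qed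

lemma pushvec_scale: "pushvec S C U \<phi> n y (\<lambda>f. t * u f) = (\<lambda>i. t * pushvec S C U \<phi> n y u i)"
  unfolding pushvec_def by (simp add: fun_eq_iff)

lemma alt0: "alt 0 I w = 1"
  unfolding alt_def by simp

lemma incr0: "incr n 0 = {\<lambda>_. 0}"
  unfolding incr_def by (auto simp: fun_eq_iff)



lemma mu_scale:
  assumes MLin: "\<forall>v j u c. (\<forall>i<k. v i \<in> orb_tangent C A y) \<and> j < k \<and> u \<in> orb_tangent C A y \<longrightarrow>
                \<mu> y (v(j := (\<lambda>f. v j f + c * u f))) = \<mu> y v + c * \<mu> y (v(j := u))"
    and k: "0 < k" and v: "\<forall>i<k. v i \<in> orb_tangent C A y"
  shows "\<mu> y (v(0 := (\<lambda>f. t * v 0 f))) = t * \<mu> y v"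
proof -
  have "\<mu> y (v(0 := (\<lambda>f. v 0 f + (t - 1) * v 0 f))) = \<mu> y v + (t - 1) * \<mu> y (v(0 := v 0))"
    using MLin[rule_format, of v 0 "v 0" "t - 1"] k v by simp
  moreover have "(\<lambda>f. v 0 f + (t - 1) * v 0 f) = (\<lambda>f. t * v 0 f)"
    by (rule ext) (simp add: algebra_simps)
  ultimately show ?thesis by (simp add: algebra_simps)
qed

theorem lemmal:
  fixes S :: "'a set" and C :: "('a \<Rightarrow> real) set"
    and A :: "(('a \<Rightarrow> real) \<Rightarrow> ('a \<Rightarrow> real)) set"
    and \<mu> :: "'a \<Rightarrow> (nat \<Rightarrow> ('a \<Rightarrow> real) \<Rightarrow> real) \<Rightarrow> real" and k :: nat
  assumes "subcartesian S C"
    and "lie_subalgebra S C A"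
    and "locally_complete S C A"
    and "orbital_form S C A k \<mu>"
  shows "\<forall>x\<in>S. \<exists>V \<phi> n a. x \<in> V \<and> chart S C V \<phi> n \<and> diff_form n k a \<and>
           (\<forall>y\<in>V. \<forall>v. (\<forall>j<k. v j \<in> orb_tangent C A y) \<longrightarrow>
              \<mu> y v = form_eval n k a (\<phi> y) (\<lambda>j. pushvec S C V \<phi> n y (v j)))"
proof (intro ballI)
  fix x assume x: "x \<in> S"
  have MLin: "\<forall>y\<in>S. (\<forall>v j u c. (\<forall>i<k. v i \<in> orb_tangent C A y) \<and> j < k \<and> u \<in> orb_tangent C A y \<longrightarrow>
                \<mu> y (v(j := (\<lambda>f. v j f + c * u f))) = \<mu> y v + c * \<mu> y (v(j := u)))"
    using assms(4) unfolding orbital_form_def by (elim conjE) (intro ballI, erule_tac x=y in ballE, elim conjE, assumption, simp)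
  have LOC: "\<exists>U \<phi> n f. x \<in> U \<and> chart S C U \<phi> n \<and> smooth_Rn (n + n ^ k) f \<and>
        (\<forall>y\<in>U. \<forall>v. (\<forall>j<k. v j \<in> orb_tangent C A y) \<longrightarrow>
           \<mu> y v = f (wedge_coords n k (\<phi> y) (\<lambda>j. pushvec S C U \<phi> n y (v j))))"
    using assms(4) x unfolding orbital_form_def by (elim conjE) (erule ballE, assumption, simp)
  then obtain U \<phi> n f where U: "x \<in> U" "chart S C U \<phi> n" "smooth_Rn (n + n ^ k) f"
    and H: "\<forall>y\<in>U. \<forall>v. (\<forall>j<k. v j \<in> orb_tangent C A y) \<longrightarrow>
           \<mu> y v = f (wedge_coords n k (\<phi> y) (\<lambda>j. pushvec S C U \<phi> n y (v j)))"
    by (elim exE conjE)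
  have "openin (dtop S C) U" using U(2) unfolding chart_def by (elim conjE)
  then have US: "U \<subseteq> S" by (rule dtop_subset)
  show "\<exists>V \<phi> n a. x \<in> V \<and> chart S C V \<phi> n \<and> diff_form n k a \<and>
           (\<forall>y\<in>V. \<forall>v. (\<forall>j<k. v j \<in> orb_tangent C A y) \<longrightarrow>
              \<mu> y v = form_eval n k a (\<phi> y) (\<lambda>j. pushvec S C V \<phi> n y (v j)))"
  proof (cases "k = 0")
    case True
    define c where "c = (\<lambda>j::nat. if j = n then (1::real) else 0)"
    define a where "a = (\<lambda>(I::nat\<Rightarrow>nat) p. f (emb n c p))"
    have cR: "c \<in> Rn (n + n ^ k)" using True unfolding c_def Rn_def by auto
    have DF: "diff_form n k a" unfolding diff_form_def a_def
      using smooth_emb[OF U(3) le_add1 cR] by simp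
    have EQ: "\<forall>y\<in>U. \<forall>v. (\<forall>j<k. v j \<in> orb_tangent C A y) \<longrightarrow>
              \<mu> y v = form_eval n k a (\<phi> y) (\<lambda>j. pushvec S C U \<phi> n y (v j))"
    proof (intro ballI allI impI)
      fix y v assume y: "y \<in> U" and v: "\<forall>j<k. v j \<in> orb_tangent C A y"
      let ?W = "\<lambda>j. pushvec S C U \<phi> n y (v j)"
      have "\<mu> y v = f (wedge_coords n k (\<phi> y) ?W)" using H y v by simp
      also have "wedge_coords n k (\<phi> y) ?W = emb n c (\<phi> y)"
        unfolding wedge_coords_def emb_def c_def True by (rule ext) (simp add: alt0)
      also have "f (emb n c (\<phi> y)) = form_eval n k a (\<phi> y) ?W"
        unfolding form_eval_def True incr0 a_def by (simp add: alt0)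
      finally show "\<mu> y v = form_eval n k a (\<phi> y) ?W" .
    qed
    show ?thesis
      by (rule exI[of _ U], rule exI[of _ \<phi>], rule exI[of _ n], rule exI[of _ a]) (intro conjI U(1) U(2) DF EQ)
  next
    case False
    then have k: "0 < k" by simp
    define N where "N = n + n ^ k"
    have "\<forall>i. \<exists>Di. i < N \<longrightarrow> (\<forall>x\<in>Rn N. ((\<lambda>t. f (x(i := x i + t))) has_real_derivative Di x) (at 0)) \<and> smooth_Rn N Di"
      using smooth_partial[OF U(3)] unfolding N_def by blast
    from choice[OF this] obtain D where D: "\<forall>i. i < N \<longrightarrow> (\<forall>x\<in>Rn N. ((\<lambda>t. f (x(i := x i + t))) has_real_derivative D i x) (at 0)) \<and> smooth_Rn N (D i)" ..
    interpret smf N f D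
      by unfold_locales (use D in simp)
    define e where "e = emb n (\<lambda>_. 0)"
    have zR: "(\<lambda>_. 0) \<in> Rn N" by (simp add: Rn_def)
    define good where "good m \<longleftrightarrow> (\<exists>I\<in>incr n k. \<exists>s. \<forall>w. alt k (digits n k m) w = s * alt k I w)" for m
    define IS where "IS m = (SOME q. fst q \<in> incr n k \<and> (\<forall>w. alt k (digits n k m) w = snd q * alt k (fst q) w))" for m
    have IS: "fst (IS m) \<in> incr n k \<and> (\<forall>w. alt k (digits n k m) w = snd (IS m) * alt k (fst (IS m)) w)"
      if "good m" for m
    proof -
      from that obtain I s where "I \<in> incr n k" "\<forall>w. alt k (digits n k m) w = s * alt k I w"
        unfolding good_def by (elim bexE exE)
      then have "\<exists>q. fst q \<in> incr n k \<and> (\<forall>w. alt k (digits n k m) w = snd q * alt k (fst q) w)"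
        by (intro exI[of _ "(I, s)"]) simp
      then show ?thesis unfolding IS_def by (rule someI_ex)
    qed
    have notgood: "alt k (digits n k m) w = 0" if "m < n ^ k" "\<not> good m" for m w
    proof -
      have "0 < n" using that(1) k by (cases n) (simp_all add: power_0_left)
      from alt_reduce[OF digits_lt[OF this, of k m]] that(2) show ?thesis
        unfolding good_def by blast
    qed
    define M where "M = {m. m < n ^ k \<and> good m}"
    have finM: "finite M" unfolding M_def by simp
    define a where "a I p = (\<Sum>m\<in>{m\<in>M. fst (IS m) = I}. snd (IS m) * D (n + m) (e p))" for I p
    have DF: "diff_form n k a"
      unfolding diff_form_def
    proof
      fix I assume "I \<in> incr n k"
      have "smooth_Rn n (\<lambda>p. D (n + m) (e p))" if "m \<in> {m\<in>M. fst (IS m) = I}" for m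
      proof -
        have "n + m < N" using that unfolding M_def N_def by simp
        then show ?thesis unfolding e_def using smooth_emb[OF conjunct2[OF Dh] _ zR, of "n + m" n] by (simp add: N_def)
      qed
      then have "smooth_Rn n (\<lambda>p. \<Sum>m\<in>{m\<in>M. fst (IS m) = I}. snd (IS m) * D (n + m) (e p))"
        using finM by (intro smooth_sum) auto
      then show "smooth_Rn n (a I)" unfolding a_def .
    qed
    have EQ: "\<forall>y\<in>U. \<forall>v. (\<forall>j<k. v j \<in> orb_tangent C A y) \<longrightarrow>
              \<mu> y v = form_eval n k a (\<phi> y) (\<lambda>j. pushvec S C U \<phi> n y (v j))"
    proof (intro ballI allI impI)
      fix y v assume y: "y \<in> U" and v: "\<forall>j<k. v j \<in> orb_tangent C A y"
      define p where "p = \<phi> y"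
      define W where "W = (\<lambda>j. pushvec S C U \<phi> n y (v j))"
      define E where "E j = (if n \<le> j \<and> j < N then alt k (digits n k (j - n)) W else 0)" for j
      have ER: "E \<in> Rn N" unfolding E_def Rn_def by simp
      have xR: "e p \<in> Rn N" unfolding e_def by (rule emb_Rn[OF _ zR]) (simp add: N_def)
      have yS: "y \<in> S" using y US by blast
      have hom: "f (\<lambda>j. e p j + t * E j) = t * \<mu> y v" for t
      proof -
        define v' where "v' = v(0 := (\<lambda>f. t * v 0 f))"
        have v': "\<forall>j<k. v' j \<in> orb_tangent C A y"
          unfolding v'_def using v k by (auto intro: orb_scale)
        have W': "(\<lambda>j. pushvec S C U \<phi> n y (v' j)) = W(0 := (\<lambda>i. t * W 0 i))"
          unfolding v'_def W_def by (rule ext) (simp add: pushvec_scale)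
        have "(\<lambda>j. e p j + t * E j) = wedge_coords n k p (W(0 := (\<lambda>i. t * W 0 i)))"
          by (rule ext) (simp add: wedge_coords_def e_def emb_def E_def alt_scale[OF k] N_def)
        also have "\<dots> = wedge_coords n k (\<phi> y) (\<lambda>j. pushvec S C U \<phi> n y (v' j))"
          unfolding W' p_def ..
        finally have "f (\<lambda>j. e p j + t * E j) = \<mu> y v'"
          using H y v' by simp
        also have "\<dots> = t * \<mu> y v"
          unfolding v'_def by (rule mu_scale[where \<mu>=\<mu> and y=y and C=C and A=A and k=k and t=t, OF bspec[OF MLin yS] k v])
        finally show ?thesis .
      qed
      have d1: "((\<lambda>t. f (\<lambda>j. e p j + t * E j)) has_real_derivative (\<Sum>i<N. E i * D i (e p))) (at 0)"
        by (rule dir_deriv[OF le_refl xR ER])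
      have "((\<lambda>t. t * \<mu> y v) has_real_derivative 1 * \<mu> y v) (at 0)"
        by (rule DERIV_cmult_right[OF DERIV_ident])
      then have d2: "((\<lambda>t. f (\<lambda>j. e p j + t * E j)) has_real_derivative \<mu> y v) (at 0)"
        unfolding hom by simp
      have "\<mu> y v = (\<Sum>i<N. E i * D i (e p))" by (rule DERIV_unique[OF d2 d1])
      also have "\<dots> = (\<Sum>m<n ^ k. alt k (digits n k m) W * D (n + m) (e p))"
        unfolding N_def sum_split_nat by (simp add: E_def N_def)
      also have "\<dots> = (\<Sum>m\<in>M. alt k (digits n k m) W * D (n + m) (e p))"
        by (rule sum.mono_neutral_right) (auto simp: M_def notgood)
      also have "\<dots> = (\<Sum>m\<in>M. (snd (IS m) * D (n + m) (e p)) * alt k (fst (IS m)) W)"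
        by (rule sum.cong) (auto simp: M_def dest!: IS)
      also have "\<dots> = (\<Sum>I\<in>incr n k. \<Sum>m\<in>{m\<in>M. fst (IS m) = I}. (snd (IS m) * D (n + m) (e p)) * alt k (fst (IS m)) W)"
        by (rule sum.group[symmetric, OF finM finite_incr]) (auto simp: M_def dest!: IS)
      also have "\<dots> = (\<Sum>I\<in>incr n k. a I p * alt k I W)"
        unfolding a_def sum_distrib_right by (intro sum.cong refl) auto
      also have "\<dots> = form_eval n k a (\<phi> y) (\<lambda>j. pushvec S C U \<phi> n y (v j))"
        unfolding form_eval_def p_def W_def ..
      finally show "\<mu> y v = form_eval n k a (\<phi> y) (\<lambda>j. pushvec S C U \<phi> n y (v j))" .
    qed
    show ?thesis
      by (rule exI[of _ U], rule exI[of _ \<phi>], rule exI[of _ n], rule exI[of _ a]) (intro conjI U(1) U(2) DF EQ)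
  qed
qed

end
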